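(* Every chandelier is a restricted frame graph.
   Context: A chandelier is a graph obtained from a tree $T$ by adding a new vertex adjacent to every leaf of $T$. A frame is the boundary of an axis-parallel box $I\times J\subset\mathbb R^2$. A graph $G$ is a restricted frame graph if there is a family of frames $\{F_v : v\in V(G)\}$ with $uv\in E(G)$ iff $F_u\cap F_v\neq\emptyset$, satisfying: (1) corners of a frame do not coincide with any point of another frame; (2) the left side of any frame does not intersect any other frame; (3) if the right side of a frame intersects a second frame, this right side intersects both the top and the bottom side of the second frame; (4) if two frames have non-empty intersection, then no frame is entirely contained in the intersection of the two regions bounded by these two frames. *)

theory Defs
  imports Complex_Main
begin

definition simple_graph :: "'a set \<Rightarrow> ('a \<Rightarrow> 'a \<Rightarrow> bool) \<Rightarrow> bool" where
  "simple_graph V adj \<longleftrightarrow> finite V \<and> (\<forall>u v. adj u v \<longrightarrow> adj v u) \<and> (\<forall>v. \<not> adj v v)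
     \<and> (\<forall>u v. adj u v \<longrightarrow> u \<in> V \<and> v \<in> V)"

definition connected_on :: "'a set \<Rightarrow> ('a \<Rightarrow> 'a \<Rightarrow> bool) \<Rightarrow> bool" where
  "connected_on T adj \<longleftrightarrow>
     (\<forall>u\<in>T. \<forall>v\<in>T. (u, v) \<in> {(x, y). x \<in> T \<and> y \<in> T \<and> adj x y}\<^sup>*)"

definition acyclic_on :: "'a set \<Rightarrow> ('a \<Rightarrow> 'a \<Rightarrow> bool) \<Rightarrow> bool" where
  "acyclic_on T adj \<longleftrightarrow>
     \<not> (\<exists>cs. length cs \<ge> 3 \<and> distinct cs \<and> set cs \<subseteq> T
            \<and> (\<forall>i. i + 1 < length cs \<longrightarrow> adj (cs ! i) (cs ! (i + 1)))
            \<and> adj (last cs) (hd cs))"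

definition is_tree :: "'a set \<Rightarrow> ('a \<Rightarrow> 'a \<Rightarrow> bool) \<Rightarrow> bool" where
  "is_tree T adj \<longleftrightarrow> finite T \<and> T \<noteq> {} \<and> connected_on T adj \<and> acyclic_on T adj"

definition is_leaf :: "'a set \<Rightarrow> ('a \<Rightarrow> 'a \<Rightarrow> bool) \<Rightarrow> 'a \<Rightarrow> bool" where
  "is_leaf T adj v \<longleftrightarrow> v \<in> T \<and> card {u \<in> T. adj v u} = 1"

definition chandelier :: "'a set \<Rightarrow> ('a \<Rightarrow> 'a \<Rightarrow> bool) \<Rightarrow> bool" where
  "chandelier V adj \<longleftrightarrow> simple_graph V adj \<and>
     (\<exists>T r. r \<notin> T \<and> V = insert r T \<and> is_tree T adj
            \<and> (\<forall>v\<in>T. adj r v \<longleftrightarrow> is_leaf T adj v))"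

text \<open>A box is encoded as (x1, x2, y1, y2), standing for [x1,x2] \<times> [y1,y2]
with x1 < x2 and y1 < y2.\<close>

type_synonym box = "real \<times> real \<times> real \<times> real"

fun valid_box :: "box \<Rightarrow> bool" where
  "valid_box (x1, x2, y1, y2) \<longleftrightarrow> x1 < x2 \<and> y1 < y2"

fun region :: "box \<Rightarrow> (real \<times> real) set" where
  "region (x1, x2, y1, y2) = {x1..x2} \<times> {y1..y2}"

fun left_side :: "box \<Rightarrow> (real \<times> real) set" where
  "left_side (x1, x2, y1, y2) = {x1} \<times> {y1..y2}"

fun right_side :: "box \<Rightarrow> (real \<times> real) set" where
  "right_side (x1, x2, y1, y2) = {x2} \<times> {y1..y2}"

fun bottom_side :: "box \<Rightarrow> (real \<times> real) set" where
  "bottom_side (x1, x2, y1, y2) = {x1..x2} \<times> {y1}"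

fun top_side :: "box \<Rightarrow> (real \<times> real) set" where
  "top_side (x1, x2, y1, y2) = {x1..x2} \<times> {y2}"

definition frame :: "box \<Rightarrow> (real \<times> real) set" where
  "frame B = left_side B \<union> right_side B \<union> bottom_side B \<union> top_side B"

fun corners :: "box \<Rightarrow> (real \<times> real) set" where
  "corners (x1, x2, y1, y2) = {(x1, y1), (x1, y2), (x2, y1), (x2, y2)}"

definition restricted_frame_rep ::
  "'a set \<Rightarrow> ('a \<Rightarrow> 'a \<Rightarrow> bool) \<Rightarrow> ('a \<Rightarrow> box) \<Rightarrow> bool" where
  "restricted_frame_rep V adj F \<longleftrightarrow>
     (\<forall>v\<in>V. valid_box (F v))
   \<and> (\<forall>u\<in>V. \<forall>v\<in>V. u \<noteq> v \<longrightarrow> (adj u v \<longleftrightarrow> frame (F u) \<inter> frame (F v) \<noteq> {}))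
   \<comment> \<open>(1) corners of a frame avoid every other frame\<close>
   \<and> (\<forall>u\<in>V. \<forall>v\<in>V. u \<noteq> v \<longrightarrow> corners (F u) \<inter> frame (F v) = {})
   \<comment> \<open>(2) the left side of a frame avoids every other frame\<close>
   \<and> (\<forall>u\<in>V. \<forall>v\<in>V. u \<noteq> v \<longrightarrow> left_side (F u) \<inter> frame (F v) = {})
   \<comment> \<open>(3) a right side meeting another frame meets its top and bottom sides\<close>
   \<and> (\<forall>u\<in>V. \<forall>v\<in>V. u \<noteq> v \<longrightarrow> right_side (F u) \<inter> frame (F v) \<noteq> {} \<longrightarrow>
        right_side (F u) \<inter> top_side (F v) \<noteq> {} \<and> right_side (F u) \<inter> bottom_side (F v) \<noteq> {})
   \<comment> \<open>(4) no frame lies inside the intersection of the regions of two intersecting frames\<close>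
   \<and> (\<forall>u\<in>V. \<forall>v\<in>V. u \<noteq> v \<longrightarrow> frame (F u) \<inter> frame (F v) \<noteq> {} \<longrightarrow>
        (\<forall>w\<in>V. \<not> frame (F w) \<subseteq> region (F u) \<inter> region (F v)))"

definition restricted_frame_graph :: "'a set \<Rightarrow> ('a \<Rightarrow> 'a \<Rightarrow> bool) \<Rightarrow> bool" where
  "restricted_frame_graph V adj \<longleftrightarrow> (\<exists>F. restricted_frame_rep V adj F)"

end

theory Submission
  imports Defs
begin


fun chain :: "('a \<Rightarrow> 'a \<Rightarrow> bool) \<Rightarrow> 'a list \<Rightarrow> bool" where
  "chain R (x # y # zs) = (R x y \<and> chain R (y # zs))"
| "chain R _ = True"

lemma chain_Cons: "chain R (x # xs) \<longleftrightarrow> (xs \<noteq> [] \<longrightarrow> R x (hd xs)) \<and> chain R xs"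
  by (cases xs) auto

lemma chain_append:
  "chain R (xs @ ys) \<longleftrightarrow> chain R xs \<and> chain R ys \<and> (xs \<noteq> [] \<and> ys \<noteq> [] \<longrightarrow> R (last xs) (hd ys))"
  by (induction xs) (auto simp: chain_Cons)

lemma chain_rev:
  assumes "\<And>u v. R u v \<Longrightarrow> R v u"
  shows "chain R (rev xs) = chain R xs"
  by (induction xs) (auto simp: chain_append chain_Cons last_rev intro: assms)

lemma chain_nth: "chain R xs \<longleftrightarrow> (\<forall>i. i + 1 < length xs \<longrightarrow> R (xs ! i) (xs ! (i + 1)))"
proof (induction xs)
  case Nil
  then show ?case by simp
next
  case (Cons x xs)
  show ?case
  proof (cases xs)
    case Nil
    then show ?thesis by simp
  next
    case (Cons y ys)
    show ?thesis
    proof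
      assume "chain R (x # xs)"
      then have 1: "R x y" and 2: "chain R xs" using Cons by auto
      show "\<forall>i. i + 1 < length (x # xs) \<longrightarrow> R ((x # xs) ! i) ((x # xs) ! (i + 1))"
      proof (intro allI impI)
        fix i assume "i + 1 < length (x # xs)"
        then show "R ((x # xs) ! i) ((x # xs) ! (i + 1))"
          using 1 2 Cons.IH Cons by (cases i) auto
      qed
    next
      assume H: "\<forall>i. i + 1 < length (x # xs) \<longrightarrow> R ((x # xs) ! i) ((x # xs) ! (i + 1))"
      have "R x y" using H[rule_format, of 0] Cons by simp
      moreover have "chain R xs" unfolding Cons.IH
      proof (intro allI impI)
        fix i assume "i + 1 < length xs"
        then show "R (xs ! i) (xs ! (i + 1))" using H[rule_format, of "Suc i"] by simp
      qed
      ultimately show "chain R (x # xs)" using Cons by simp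
    qed
  qed
qed

locale treeloc =
  fixes T :: "'a set" and adj :: "'a \<Rightarrow> 'a \<Rightarrow> bool" and rt :: 'a
  assumes sym: "\<And>u v. adj u v \<Longrightarrow> adj v u"
    and irr: "\<And>v. \<not> adj v v"
    and conn: "connected_on T adj" and acyc: "acyclic_on T adj"
    and finT: "finite T"
    and rtT: "rt \<in> T"
begin

definition E where "E = {(x, y). x \<in> T \<and> y \<in> T \<and> adj x y}"
definition dep :: "'a \<Rightarrow> nat" where "dep v = (LEAST n. (rt, v) \<in> E ^^ n)"
definition par :: "'a \<Rightarrow> 'a" where "par v = (SOME u. u \<in> T \<and> adj u v \<and> Suc (dep u) = dep v)"

lemma reach: "v \<in> T \<Longrightarrow> \<exists>n. (rt, v) \<in> E ^^ n"
proof -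
  assume v: "v \<in> T"
  have "(rt, v) \<in> E\<^sup>*" using conn rtT v unfolding connected_on_def E_def by blast
  then show ?thesis using rtrancl_power by blast
qed

lemma dep_path: "v \<in> T \<Longrightarrow> (rt, v) \<in> E ^^ dep v"
  unfolding dep_def by (rule LeastI_ex) (rule reach)

lemma dep_le: "(rt, v) \<in> E ^^ n \<Longrightarrow> dep v \<le> n"
  unfolding dep_def by (rule Least_le)

lemma dep_rt: "dep rt = 0" using dep_le[of rt 0] by simp

lemma dep0: "v \<in> T \<Longrightarrow> dep v = 0 \<Longrightarrow> v = rt" using dep_path[of v] by simp

lemma dep_adj: "u \<in> T \<Longrightarrow> v \<in> T \<Longrightarrow> adj u v \<Longrightarrow> dep v \<le> Suc (dep u)"
proof -
  assume "u \<in> T" "v \<in> T" "adj u v"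
  then have "(rt, v) \<in> E ^^ Suc (dep u)" using dep_path[of u] by (auto simp: E_def intro: relpow_Suc_I)
  then show ?thesis by (rule dep_le)
qed

lemma par_ex: "v \<in> T \<Longrightarrow> v \<noteq> rt \<Longrightarrow> \<exists>u. u \<in> T \<and> adj u v \<and> Suc (dep u) = dep v"
proof -
  assume v: "v \<in> T" "v \<noteq> rt"
  then obtain n where n: "dep v = Suc n" using dep0 by (cases "dep v") auto
  with dep_path[OF v(1)] obtain u where u: "(rt,u) \<in> E ^^ n" "(u,v) \<in> E" by (auto elim: relpow_Suc_E)
  then have "u \<in> T" "adj u v" "dep u \<le> n" by (auto simp: E_def intro: dep_le)
  moreover have "dep v \<le> Suc (dep u)" using dep_adj \<open>u \<in> T\<close> \<open>adj u v\<close> v by auto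
  ultimately show ?thesis using n by (intro exI[of _ u]) auto
qed

lemma par: "v \<in> T \<Longrightarrow> v \<noteq> rt \<Longrightarrow> par v \<in> T \<and> adj (par v) v \<and> Suc (dep (par v)) = dep v"
  unfolding par_def by (rule someI_ex) (rule par_ex)

lemma anc: "v \<in> T \<Longrightarrow> i \<le> dep v \<Longrightarrow> (par ^^ i) v \<in> T \<and> dep ((par ^^ i) v) = dep v - i"
proof (induction i)
  case 0 thus ?case by simp
next
  case (Suc i)
  then have IH: "(par ^^ i) v \<in> T" "dep ((par ^^ i) v) = dep v - i" by auto
  then have "(par ^^ i) v \<noteq> rt" using Suc.prems dep_rt by auto
  then show ?case using par[OF IH(1)] IH Suc.prems by auto
qed

fun up :: "'a \<Rightarrow> nat \<Rightarrow> 'a list" where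
  "up a 0 = [a]" | "up a (Suc k) = a # up (par a) k"

lemma up_hd[simp]: "hd (up a k) = a" by (cases k) auto
lemma up_ne[simp]: "up a k \<noteq> []" by (cases k) auto
lemma up_len[simp]: "length (up a k) = Suc k" by (induction k arbitrary: a) auto
lemma up_last: "last (up a k) = (par ^^ k) a"
  by (induction k arbitrary: a) (auto simp: funpow_swap1)
lemma up_set: "x \<in> set (up a k) \<longleftrightarrow> (\<exists>i\<le>k. x = (par ^^ i) a)"
proof (induction k arbitrary: a)
  case 0 then show ?case by simp
next
  case (Suc k)
  show ?case
  proof
    assume "x \<in> set (up a (Suc k))"
    then have "x = a \<or> (\<exists>i\<le>k. x = (par ^^ i) (par a))" using Suc by auto
    then show "\<exists>i\<le>Suc k. x = (par ^^ i) a"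
      by (metis Suc_le_mono funpow_0 funpow_Suc_right le0 o_apply)
  next
    assume "\<exists>i\<le>Suc k. x = (par ^^ i) a"
    then obtain i where i: "i \<le> Suc k" "x = (par ^^ i) a" by blast
    show "x \<in> set (up a (Suc k))"
    proof (cases i)
      case 0 then show ?thesis using i by simp
    next
      case (Suc j)
      then have "x = (par ^^ j) (par a)" "j \<le> k" using i by (auto simp: funpow_swap1)
      then show ?thesis using Suc.IH by auto
    qed
  qed
qed

lemma up_props: "a \<in> T \<Longrightarrow> k \<le> dep a \<Longrightarrow>
   chain adj (up a k) \<and> distinct (up a k) \<and> (\<forall>x\<in>set (up a k). x \<in> T \<and> dep x \<le> dep a)"
proof (induction k arbitrary: a)
  case 0 then show ?case by simp
next
  case (Suc k)
  then have "a \<noteq> rt" using dep_rt by auto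
  then have p: "par a \<in> T" "adj (par a) a" "Suc (dep (par a)) = dep a" using par Suc.prems by auto
  then have IH: "chain adj (up (par a) k) \<and> distinct (up (par a) k) \<and> (\<forall>x\<in>set (up (par a) k). x \<in> T \<and> dep x \<le> dep (par a))"
    using Suc by auto
  then show ?case using p Suc.prems sym by (auto simp: chain_Cons)
qed


lemma path2:
  assumes a: "a \<in> T" and b: "b \<in> T" and ab: "a \<noteq> b" and d: "dep a = dep b"
  shows "\<exists>cs. hd cs = a \<and> last cs = b \<and> 3 \<le> length cs \<and> distinct cs \<and> set cs \<subseteq> T
           \<and> chain adj cs \<and> (\<forall>x\<in>set cs. dep x \<le> dep a)"
proof -
  define P where "P k \<longleftrightarrow> (par ^^ k) a = (par ^^ k) b" for k
  have "(par ^^ dep a) a = rt" using anc[of a "dep a"] a dep0 by auto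
  moreover have "(par ^^ dep a) b = rt" using anc[of b "dep b"] b dep0 d by auto
  ultimately have "P (dep a)" by (simp add: P_def)
  define K where "K = (LEAST k. P k)"
  have PK: "P K" and Kle: "K \<le> dep a" using \<open>P (dep a)\<close> unfolding K_def
    by (auto intro: LeastI Least_le)
  have K0: "K \<noteq> 0"
  proof
    assume "K = 0"
    then have "(par ^^ 0) a = (par ^^ 0) b" using PK by (simp add: P_def)
    then show False using ab by simp
  qed
  then obtain K' where K': "K = Suc K'" by (cases K) auto
  have notP: "\<not> P i" if "i < K" for i using that unfolding K_def by (rule not_less_Least)
  define cs where "cs = up a K @ rev (up b K')"
  have ua: "chain adj (up a K) \<and> distinct (up a K) \<and> (\<forall>x\<in>set (up a K). x \<in> T \<and> dep x \<le> dep a)"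
    using up_props[OF a Kle] .
  have ub: "chain adj (up b K') \<and> distinct (up b K') \<and> (\<forall>x\<in>set (up b K'). x \<in> T \<and> dep x \<le> dep b)"
  proof -
    have "K' \<le> dep b" using Kle K' d by simp
    then show ?thesis using up_props[OF b] by blast
  qed
  have disj: "set (up a K) \<inter> set (up b K') = {}"
  proof (rule ccontr)
    assume "set (up a K) \<inter> set (up b K') \<noteq> {}"
    then obtain x where "x \<in> set (up a K)" "x \<in> set (up b K')" by blast
    then obtain i j where ij: "i \<le> K" "x = (par ^^ i) a" "j \<le> K'" "x = (par ^^ j) b"
      unfolding up_set by blast
    have "dep x = dep a - i" using anc[OF a, of i] ij Kle by auto
    moreover have "dep x = dep b - j" using anc[OF b, of j] ij Kle K' d by auto
    ultimately have "i = j" using ij Kle K' d by auto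
    then have "P i" using ij by (simp add: P_def)
    moreover have "i < K" using \<open>i = j\<close> ij K' by auto
    ultimately show False using notP by blast
  qed
  have xb: "(par ^^ K') b \<in> T" "dep ((par ^^ K') b) = dep b - K'" using anc[OF b, of K'] Kle K' d by auto
  then have "(par ^^ K') b \<noteq> rt" using Kle K' d dep_rt by auto
  then have "adj (par ((par ^^ K') b)) ((par ^^ K') b)" using par xb by blast
  then have "adj ((par ^^ K) a) ((par ^^ K') b)" using PK K' by (simp add: P_def)
  then have link: "adj (last (up a K)) (hd (rev (up b K')))" by (simp add: up_last hd_rev)
  have "chain adj (rev (up b K'))" using chain_rev[of adj "up b K'"] sym ub by blast
  then have "chain adj cs" unfolding cs_def chain_append
    using ua link by simp
  moreover have "distinct cs" unfolding cs_def using ua ub disj by auto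
  moreover have "set cs \<subseteq> T" "\<forall>x\<in>set cs. dep x \<le> dep a" unfolding cs_def using ua ub d by auto
  moreover have "hd cs = a" "last cs = b" "3 \<le> length cs" unfolding cs_def using K' by (auto simp: last_rev)
  ultimately show ?thesis by blast
qed

lemma no_cycle:
  assumes "hd cs = a" "last cs = b" "3 \<le> length cs" "distinct cs" "set cs \<subseteq> T" "chain adj cs" "adj b a"
  shows False
  using acyc assms unfolding acyclic_on_def chain_nth by blast

lemma adj_par:
  assumes u: "u \<in> T" and v: "v \<in> T" and uv: "adj u v"
  shows "(v \<noteq> rt \<and> u = par v) \<or> (u \<noteq> rt \<and> v = par u)"
proof -
  have d1: "dep v \<le> Suc (dep u)" and d2: "dep u \<le> Suc (dep v)"
    using dep_adj u v uv sym by auto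
  have "u \<noteq> v" using uv irr by auto
  have c1: "v \<noteq> rt \<and> u = par v"
    if u: "u \<in> T" and v: "v \<in> T" and uv: "adj u v" and dd: "dep v = Suc (dep u)" for u v
  proof -
    have vr: "v \<noteq> rt" using dd dep_rt by auto
    show ?thesis
    proof (rule ccontr)
      assume "\<not> (v \<noteq> rt \<and> u = par v)"
      then have ne: "par v \<noteq> u" using vr by auto
      have p: "par v \<in> T" "adj (par v) v" "Suc (dep (par v)) = dep v" using par v vr by auto
      then obtain cs where cs: "hd cs = par v" "last cs = u" "3 \<le> length cs" "distinct cs" "set cs \<subseteq> T"
          "chain adj cs" "\<forall>x\<in>set cs. dep x \<le> dep (par v)"
        using path2[OF p(1) u ne] dd p(3) by auto
      have "v \<notin> set cs" using cs(7) p(3) by fastforce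
      have "cs \<noteq> []" using cs by auto
      have "chain adj (v # cs)" using cs p(2) sym \<open>cs \<noteq> []\<close> by (simp add: chain_Cons)
      show False
        by (rule no_cycle[of "v # cs" v u])
          (use cs \<open>v \<notin> set cs\<close> \<open>chain adj (v # cs)\<close> v uv sym \<open>cs \<noteq> []\<close> in auto)
    qed
  qed
  show ?thesis
  proof (cases "dep u = dep v")
    case True
    then obtain cs where cs: "hd cs = u" "last cs = v" "3 \<le> length cs" "distinct cs" "set cs \<subseteq> T"
        "chain adj cs"
      using path2[OF u v \<open>u \<noteq> v\<close>] by auto
    show ?thesis using no_cycle[OF cs] uv sym by blast
  next
    case False
    then have "dep v = Suc (dep u) \<or> dep u = Suc (dep v)" using d1 d2 by auto
    then show ?thesis
    proof
      assume "dep v = Suc (dep u)"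
      then show ?thesis using c1[OF u v uv] by blast
    next
      assume "dep u = Suc (dep v)"
      then show ?thesis using c1[OF v u] uv sym by blast
    qed
  qed
qed

definition Ch where "Ch v = {c \<in> T. c \<noteq> rt \<and> par c = v}"

lemma Ch_fin: "finite (Ch v)" using finT unfolding Ch_def by auto

lemma nbrs: "v \<in> T \<Longrightarrow> {u \<in> T. adj v u} = (if v = rt then {} else {par v}) \<union> Ch v"
proof -
  assume v: "v \<in> T"
  show ?thesis
  proof (intro equalityI subsetI)
    fix u assume "u \<in> {u \<in> T. adj v u}"
    then have "u \<in> T" "adj v u" by auto
    then show "u \<in> (if v = rt then {} else {par v}) \<union> Ch v"
      using adj_par[OF v] by (auto simp: Ch_def)
  next
    fix u assume "u \<in> (if v = rt then {} else {par v}) \<union> Ch v"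
    then have "(v \<noteq> rt \<and> u = par v) \<or> (u \<in> T \<and> u \<noteq> rt \<and> par u = v)"
      by (auto simp: Ch_def split: if_splits)
    then show "u \<in> {u \<in> T. adj v u}"
    proof
      assume "v \<noteq> rt \<and> u = par v"
      then show ?thesis using par[OF v] sym by auto
    next
      assume H: "u \<in> T \<and> u \<noteq> rt \<and> par u = v"
      then have "adj (par u) u" using par by blast
      then show ?thesis using H sym by auto
    qed
  qed
qed

lemma par_notCh: "v \<in> T \<Longrightarrow> v \<noteq> rt \<Longrightarrow> par v \<notin> Ch v"
proof
  assume v: "v \<in> T" "v \<noteq> rt" and c: "par v \<in> Ch v"
  then have "par v \<in> T" "par v \<noteq> rt" "par (par v) = v" unfolding Ch_def by auto
  then have "Suc (dep v) = dep (par v)" using par[of "par v"] by auto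
  moreover have "Suc (dep (par v)) = dep v" using par[OF v] by auto
  ultimately show False by simp
qed

lemma leaf_iff: "v \<in> T \<Longrightarrow> v \<noteq> rt \<Longrightarrow> is_leaf T adj v \<longleftrightarrow> Ch v = {}"
  unfolding is_leaf_def using nbrs par_notCh Ch_fin by simp

lemma leaf_rt: "is_leaf T adj rt \<longleftrightarrow> card (Ch rt) = 1"
  unfolding is_leaf_def using nbrs rtT by simp

lemma Ch_adj: "c \<in> Ch v \<Longrightarrow> c \<in> T \<and> c \<noteq> rt \<and> par c = v \<and> adj v c \<and> dep c = Suc (dep v)"
  unfolding Ch_def using par by auto

lemma all_leaves:
  assumes "\<forall>v\<in>T. is_leaf T adj v"
  shows "\<exists>b. T = {rt, b} \<and> b \<noteq> rt \<and> adj rt b"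
proof -
  have "card (Ch rt) = 1" using assms rtT leaf_rt by blast
  then obtain b where b: "Ch rt = {b}" by (auto simp: card_Suc_eq)
  then have bb: "b \<in> T" "b \<noteq> rt" "par b = rt" "adj rt b" "dep b = 1" using Ch_adj[of b rt] dep_rt by auto
  have Chb: "Ch b = {}" using leaf_iff bb assms by blast
  have "v = rt \<or> v = b" if v: "v \<in> T" for v
  proof (rule ccontr)
    assume ne: "\<not> (v = rt \<or> v = b)"
    then have p: "par v \<in> T" "Suc (dep (par v)) = dep v" using par v by auto
    show False
    proof (cases "par v = rt")
      case True
      then have "v \<in> Ch rt" using v ne by (auto simp: Ch_def)
      then show False using b ne by auto
    next
      case False
      then have pp: "par (par v) \<in> T" "Suc (dep (par (par v))) = dep (par v)" using par p by auto
      define w where "w = (par ^^ (dep v - 2)) v"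
      have "dep v \<ge> 2" using pp p by auto
      then have w: "w \<in> T" "dep w = 2" using anc[OF v, of "dep v - 2"] by (auto simp: w_def)
      then have "w \<noteq> rt" using dep_rt by auto
      then have pw0: "par w \<in> T" "Suc (dep (par w)) = 2" using par w by auto
      then have pw: "par w \<in> T" "dep (par w) = 1" by auto
      then have "par w \<noteq> rt" using dep_rt by auto
      then have "par (par w) \<in> T" "dep (par (par w)) = 0" using par pw by fastforce+
      then have "par (par w) = rt" using dep0 by auto
      then have "par w \<in> Ch rt" using pw \<open>par w \<noteq> rt\<close> by (auto simp: Ch_def)
      then have "par w = b" using b by auto
      then have "w \<in> Ch b" using w \<open>w \<noteq> rt\<close> by (auto simp: Ch_def)
      then show False using Chb by auto
    qed
  qed
  then show ?thesis using bb rtT by auto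
qed

end



definition pier :: "box \<Rightarrow> box \<Rightarrow> bool" where
  "pier A B \<longleftrightarrow> (\<exists>a1 a2 b1 b2 c1 c2 d1 d2. A = (a1,a2,b1,b2) \<and> B = (c1,c2,d1,d2) \<and>
      a1 < c1 \<and> c1 < a2 \<and> a2 < c2 \<and> b1 < d1 \<and> d1 < d2 \<and> d2 < b2)"

lemma pier_I: "a1 < c1 \<Longrightarrow> c1 < a2 \<Longrightarrow> a2 < c2 \<Longrightarrow> b1 < d1 \<Longrightarrow> d1 < d2 \<Longrightarrow> d2 < b2 \<Longrightarrow>
  pier (a1,a2,b1,b2) (c1,c2,d1,d2)"
  unfolding pier_def by blast

lemma pier_props:
  assumes "pier A B"
  shows "frame A \<inter> frame B \<noteq> {}" "corners A \<inter> frame B = {}" "corners B \<inter> frame A = {}"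
   "left_side A \<inter> frame B = {}" "left_side B \<inter> frame A = {}"
   "right_side A \<inter> top_side B \<noteq> {}" "right_side A \<inter> bottom_side B \<noteq> {}"
   "right_side B \<inter> frame A = {}"
proof -
  obtain a1 a2 b1 b2 c1 c2 d1 d2 where A: "A = (a1,a2,b1,b2)" and B: "B = (c1,c2,d1,d2)" and
    ineq: "a1 < c1" "c1 < a2" "a2 < c2" "b1 < d1" "d1 < d2" "d2 < b2"
    using assms unfolding pier_def by blast
  have "(a2, d2) \<in> right_side A \<inter> top_side B" using ineq unfolding A B by auto
  then show "right_side A \<inter> top_side B \<noteq> {}" by blast
  have "(a2, d1) \<in> right_side A \<inter> bottom_side B" using ineq unfolding A B by auto
  then show "right_side A \<inter> bottom_side B \<noteq> {}" by blast
  have "(a2, d1) \<in> frame A \<inter> frame B" using ineq unfolding A B frame_def by auto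
  then show "frame A \<inter> frame B \<noteq> {}" by blast
  show "corners A \<inter> frame B = {}" "corners B \<inter> frame A = {}"
   "left_side A \<inter> frame B = {}" "left_side B \<inter> frame A = {}" "right_side B \<inter> frame A = {}"
    using ineq unfolding A B frame_def by auto
qed

lemma frame_sub_region: "valid_box A \<Longrightarrow> frame A \<subseteq> region A"
  by (cases A) (auto simp: frame_def)

lemma corners_sub: "valid_box A \<Longrightarrow> corners A \<subseteq> frame A"
  by (cases A) (auto simp: frame_def)

lemma sides_sub: "left_side A \<subseteq> frame A" "right_side A \<subseteq> frame A"
  by (auto simp: frame_def)

lemma frame_disj_region:
  "valid_box A \<Longrightarrow> valid_box B \<Longrightarrow> region A \<inter> region B = {} \<Longrightarrow> frame A \<inter> frame B = {}"
  using frame_sub_region by blast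

lemma region_disj:
  "a2 < c1 \<or> c2 < a1 \<or> b2 < d1 \<or> d2 < b1 \<Longrightarrow> region (a1,a2,b1,b2) \<inter> region (c1,c2,d1,d2) = {}"
  by auto

lemma frame_nested:
  "a1 < c1 \<Longrightarrow> c2 < a2 \<Longrightarrow> b1 < d1 \<Longrightarrow> d2 < b2 \<Longrightarrow> c1 \<le> c2 \<Longrightarrow> d1 \<le> d2 \<Longrightarrow>
   frame (a1,a2,b1,b2) \<inter> frame (c1,c2,d1,d2) = {}"
  by (auto simp: frame_def)

lemma frame_bounds:
  assumes "valid_box (e1,e2,f1,f2)" "frame (e1,e2,f1,f2) \<subseteq> region (a1,a2,b1,b2)"
  shows "a1 \<le> e1 \<and> e2 \<le> a2 \<and> b1 \<le> f1 \<and> f2 \<le> b2"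
proof -
  have "(e1,f1) \<in> frame (e1,e2,f1,f2)" "(e2,f2) \<in> frame (e1,e2,f1,f2)" using assms(1) by (auto simp: frame_def)
  then show ?thesis using assms(2) by auto
qed

lemma rep_intro:
  assumes valid: "\<forall>v\<in>V. valid_box (F v)"
  and rel: "\<And>u v. u\<in>V \<Longrightarrow> v\<in>V \<Longrightarrow> u\<noteq>v \<Longrightarrow>
      (adj u v \<and> (pier (F u) (F v) \<or> pier (F v) (F u))) \<or> (\<not> adj u v \<and> frame (F u) \<inter> frame (F v) = {})"
  and c4: "\<And>u v w. u\<in>V \<Longrightarrow> v\<in>V \<Longrightarrow> w \<in> V \<Longrightarrow> u\<noteq>v \<Longrightarrow> adj u v \<Longrightarrow>
      \<not> frame (F w) \<subseteq> region (F u) \<inter> region (F v)"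
  shows "restricted_frame_rep V adj F"
  unfolding restricted_frame_rep_def
proof (intro conjI ballI impI)
  show "valid_box (F v)" if "v \<in> V" for v using valid that by blast
next
  fix u v assume uv: "u \<in> V" "v \<in> V" "u \<noteq> v"
  note R = rel[OF uv]
  show "adj u v = (frame (F u) \<inter> frame (F v) \<noteq> {})"
    using R pier_props(1)[of "F u" "F v"] pier_props(1)[of "F v" "F u"] by blast
  show "corners (F u) \<inter> frame (F v) = {}"
    using R pier_props(2,3)[of "F u" "F v"] pier_props(2,3)[of "F v" "F u"]
      corners_sub[of "F u"] valid uv by blast
  show "left_side (F u) \<inter> frame (F v) = {}"
    using R pier_props(4,5)[of "F u" "F v"] pier_props(4,5)[of "F v" "F u"]
      sides_sub[of "F u"] by blast
  { assume H: "right_side (F u) \<inter> frame (F v) \<noteq> {}"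
    then have "pier (F u) (F v)"
      using R pier_props(8)[of "F v" "F u"] sides_sub[of "F u"] by blast
    then show "right_side (F u) \<inter> top_side (F v) \<noteq> {}" "right_side (F u) \<inter> bottom_side (F v) \<noteq> {}"
      using pier_props(6,7) by blast+ }
next
  fix u v w assume uv: "u \<in> V" "v \<in> V" "u \<noteq> v" "frame (F u) \<inter> frame (F v) \<noteq> {}" "w \<in> V"
  then have "adj u v" using rel[of u v] by blast
  then show "\<not> frame (F w) \<subseteq> region (F u) \<inter> region (F v)" using c4 uv by blast
qed



locale geoloc = treeloc +
  fixes num :: "'a \<Rightarrow> nat" and r :: 'a
  assumes num_inj: "inj_on num T" and num_lt: "\<And>v. v \<in> T \<Longrightarrow> num v < card T"
    and rT: "r \<notin> T" and rt_nl: "\<not> is_leaf T adj rt"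
    and adj_r: "\<And>v. v \<in> T \<Longrightarrow> adj r v \<longleftrightarrow> is_leaf T adj v"
    and adj_in: "\<And>u v. adj u v \<Longrightarrow> u \<in> insert r T \<and> v \<in> insert r T"
begin

definition BB :: real where "BB = 2 * real (card T) + 2"

lemma BB_pos: "BB > 0" unfolding BB_def by simp

fun L :: "nat \<Rightarrow> 'a \<Rightarrow> real" where
  "L 0 v = 0" | "L (Suc n) v = L n (par v) + (2 * real (num v) + 1) * (1 / BB ^ Suc n)"

definition lo where "lo v = L (dep v) v"
definition hi where "hi v = lo v + 1 / BB ^ dep v"

lemma lo_lt_hi: "lo v < hi v" unfolding hi_def using BB_pos by simp

lemma lo_child: "v \<in> T \<Longrightarrow> v \<noteq> rt \<Longrightarrow> lo v = lo (par v) + (2 * real (num v) + 1) * (1 / BB ^ dep v)"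
  using par[of v] unfolding lo_def by (metis L.simps(2))

lemma hi_par: "v \<in> T \<Longrightarrow> v \<noteq> rt \<Longrightarrow> hi (par v) = lo (par v) + BB * (1 / BB ^ dep v)"
proof -
  assume "v \<in> T" "v \<noteq> rt"
  then have "dep v = Suc (dep (par v))" using par by auto
  then show ?thesis unfolding hi_def using BB_pos by simp
qed

lemma hi_eq: "hi v = lo v + 1 * (1 / BB ^ dep v)" unfolding hi_def by simp

lemma child: "v \<in> T \<Longrightarrow> v \<noteq> rt \<Longrightarrow> lo (par v) < lo v \<and> hi v < hi (par v)"
proof -
  assume v: "v \<in> T" "v \<noteq> rt"
  define w where "w = 1 / BB ^ dep v"
  have w: "w > 0" using BB_pos by (simp add: w_def)
  have k: "2 * real (num v) + 2 < BB" using num_lt[OF v(1)] unfolding BB_def by simp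
  have "(2 * real (num v) + 2) * w < BB * w" using k w by (rule mult_strict_right_mono)
  moreover have "0 < (2 * real (num v) + 1) * w" using w by simp
  ultimately show ?thesis using lo_child[OF v] hi_par[OF v] hi_eq[of v] unfolding w_def[symmetric]
    by (simp add: algebra_simps)
qed

lemma sibling:
  assumes v: "v \<in> T" "v \<noteq> rt" and v': "v' \<in> T" "v' \<noteq> rt" and pp: "par v = par v'" and ne: "v \<noteq> v'"
  shows "hi v < lo v' \<or> hi v' < lo v"
proof -
  have dd: "dep v = dep v'" using par[OF v] par[OF v'] pp by auto
  define w where "w = 1 / BB ^ dep v"
  have w: "w > 0" using BB_pos by (simp add: w_def)
  have nn: "num v \<noteq> num v'" using num_inj v v' ne by (auto dest: inj_onD)
  have L1: "lo v = lo (par v) + (2 * real (num v) + 1) * w" "hi v = lo v + w"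
    using lo_child[OF v] hi_eq[of v] by (simp_all add: w_def)
  have L2: "lo v' = lo (par v) + (2 * real (num v') + 1) * w" "hi v' = lo v' + w"
    using lo_child[OF v'] hi_eq[of v'] pp dd by (simp_all add: w_def)
  show ?thesis
  proof (cases "num v < num v'")
    case True
    then have "real (num v) + 1 \<le> real (num v')" by simp
    then have "(real (num v) + 1) * w \<le> real (num v') * w" using w by (intro mult_right_mono) auto
    then show ?thesis using L1 L2 w by (simp add: algebra_simps)
  next
    case False
    then have "real (num v') + 1 \<le> real (num v)" using nn by simp
    then have "(real (num v') + 1) * w \<le> real (num v) * w" using w by (intro mult_right_mono) auto
    then show ?thesis using L1 L2 w by (simp add: algebra_simps)
  qed
qed

definition nest where "nest u w \<longleftrightarrow> dep u < dep w \<and> lo u < lo w \<and> hi w < hi u"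
definition djt where "djt u w \<longleftrightarrow> hi u < lo w \<or> hi w < lo u"

lemma lam_aux: "\<forall>u w. dep u + dep w < n \<longrightarrow> u \<in> T \<longrightarrow> w \<in> T \<longrightarrow> u = w \<or> djt u w \<or> nest u w \<or> nest w u"
proof (induction n)
  case 0 then show ?case by simp
next
  case (Suc n)
  have step: "u = w \<or> djt u w \<or> nest u w \<or> nest w u"
    if uw: "dep u + dep w < Suc n" "u \<in> T" "w \<in> T" "dep u \<le> dep w" for u w
  proof (cases "w = rt")
    case True
    then have "dep u = 0" using uw dep_rt by auto
    then show ?thesis using True dep0 uw by auto
  next
    case False
    define p where "p = par w"
    have p: "p \<in> T" "Suc (dep p) = dep w" using par[OF uw(3) False] by (auto simp: p_def)
    have cw: "lo p < lo w" "hi w < hi p" using child[OF uw(3) False] by (auto simp: p_def)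
    have "u = p \<or> djt u p \<or> nest u p \<or> nest p u" using Suc.IH uw p by auto
    then show ?thesis
    proof (elim disjE)
      assume "u = p" then show ?thesis using cw p by (auto simp: nest_def)
    next
      assume "djt u p" then show ?thesis using cw lo_lt_hi[of u] lo_lt_hi[of p] by (auto simp: djt_def)
    next
      assume "nest u p" then show ?thesis using cw p by (auto simp: nest_def)
    next
      assume np: "nest p u"
      then have du: "dep u = dep w" using p uw by (auto simp: nest_def)
      then have ur: "u \<noteq> rt" using np dep_rt by (auto simp: nest_def)
      define q where "q = par u"
      have q: "q \<in> T" "Suc (dep q) = dep u" using par[OF uw(2) ur] by (auto simp: q_def)
      have cu: "lo q < lo u" "hi u < hi q" using child[OF uw(2) ur] by (auto simp: q_def)
      have "q = p \<or> djt q p \<or> nest q p \<or> nest p q" using Suc.IH uw p q by auto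
      then show ?thesis
      proof (elim disjE)
        assume "q = p"
        then show ?thesis using sibling[OF uw(2) ur uw(3) False] by (auto simp: q_def p_def djt_def)
      next
        assume "djt q p" then show ?thesis using cw cu lo_lt_hi[of u] lo_lt_hi[of w] by (auto simp: djt_def)
      qed (use p q du in \<open>auto simp: nest_def\<close>)
    qed
  qed
  show ?case
  proof (intro allI impI)
    fix u w assume "dep u + dep w < Suc n" "u \<in> T" "w \<in> T"
    then show "u = w \<or> djt u w \<or> nest u w \<or> nest w u"
      using step[of u w] step[of w u] by (cases "dep u \<le> dep w") (auto simp: djt_def)
  qed
qed

lemma lam: "u \<in> T \<Longrightarrow> w \<in> T \<Longrightarrow> u = w \<or> djt u w \<or> nest u w \<or> nest w u"
  using lam_aux[of "Suc (dep u + dep w)"] by auto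

lemma nest_child_aux: "\<forall>w. dep w < n \<longrightarrow> w \<in> T \<longrightarrow> nest u w \<longrightarrow> u \<in> T \<longrightarrow>
    Ch u \<noteq> {} \<and> (dep w = Suc (dep u) \<longrightarrow> par w = u)"
proof (induction n)
  case 0 then show ?case by simp
next
  case (Suc n)
  show ?case
  proof (intro allI impI)
    fix w assume w: "dep w < Suc n" "w \<in> T" "nest u w" "u \<in> T"
    then have wr: "w \<noteq> rt" using dep_rt by (auto simp: nest_def)
    define p where "p = par w"
    have p: "p \<in> T" "Suc (dep p) = dep w" using par[OF w(2) wr] by (auto simp: p_def)
    have cw: "lo p < lo w" "hi w < hi p" using child[OF w(2) wr] by (auto simp: p_def)
    have "u = p \<or> djt u p \<or> nest u p \<or> nest p u" using lam[OF w(4) p(1)] .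
    then show "Ch u \<noteq> {} \<and> (dep w = Suc (dep u) \<longrightarrow> par w = u)"
    proof (elim disjE)
      assume "u = p"
      then have "w \<in> Ch u" using w wr by (auto simp: Ch_def p_def)
      then show ?thesis using \<open>u = p\<close> p_def by auto
    next
      assume "djt u p" then show ?thesis using cw w(3) lo_lt_hi[of w] by (auto simp: djt_def nest_def)
    next
      assume "nest u p"
      then show ?thesis using Suc.IH p w by (auto simp: nest_def)
    next
      assume "nest p u" then show ?thesis using p w(3) by (auto simp: nest_def)
    qed
  qed
qed

lemma nest_child: "u \<in> T \<Longrightarrow> w \<in> T \<Longrightarrow> nest u w \<Longrightarrow> Ch u \<noteq> {} \<and> (dep w = Suc (dep u) \<longrightarrow> par w = u)"
  using nest_child_aux[of "Suc (dep w)" u] by auto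

lemma lohi_bounds_aux: "\<forall>v. dep v < n \<longrightarrow> v \<in> T \<longrightarrow> 0 \<le> lo v \<and> hi v \<le> 1"
proof (induction n)
  case 0 then show ?case by simp
next
  case (Suc n)
  show ?case
  proof (intro allI impI)
    fix v assume v: "dep v < Suc n" "v \<in> T"
    show "0 \<le> lo v \<and> hi v \<le> 1"
    proof (cases "v = rt")
      case True then show ?thesis using dep_rt by (simp add: lo_def hi_def)
    next
      case False
      have p: "par v \<in> T" "Suc (dep (par v)) = dep v" using par[OF v(2) False] by auto
      then have "0 \<le> lo (par v) \<and> hi (par v) \<le> 1" using Suc.IH v by auto
      then show ?thesis using child[OF v(2) False] by auto
    qed
  qed
qed

lemma lohi_bounds: "v \<in> T \<Longrightarrow> 0 \<le> lo v \<and> hi v \<le> 1"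
  using lohi_bounds_aux[of "Suc (dep v)"] by auto

end



context geoloc
begin

definition lf where "lf v \<longleftrightarrow> v \<noteq> rt \<and> Ch v = {}"

lemma leaf_lf: "v \<in> T \<Longrightarrow> is_leaf T adj v \<longleftrightarrow> lf v"
  using leaf_iff rt_nl unfolding lf_def by auto

definition XX :: real where "XX = real (Max (dep ` T)) + 3"

lemma depX: "v \<in> T \<Longrightarrow> real (dep v) + 3 \<le> XX"
  unfolding XX_def using finT by simp

definition F :: "'a \<Rightarrow> box" where
  "F v = (if v = r then (-1, XX, -2, 2) else if lf v then (real (dep v), XX + 1, lo v, hi v)
          else (real (dep v), real (dep v) + 3/2, lo v, hi v))"

lemma F_r: "F r = (-1, XX, -2, 2)" by (simp add: F_def)

lemma F_T: "v \<in> T \<Longrightarrow> \<exists>x2. F v = (real (dep v), x2, lo v, hi v) \<and> real (dep v) + 3/2 \<le> x2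
    \<and> (lf v \<longrightarrow> x2 = XX + 1) \<and> (\<not> lf v \<longrightarrow> x2 = real (dep v) + 3/2)"
  using rT depX[of v] by (auto simp: F_def)

lemma valid_F: "v \<in> insert r T \<Longrightarrow> valid_box (F v)"
proof -
  assume v: "v \<in> insert r T"
  show ?thesis
  proof (cases "v = r")
    case True then show ?thesis using depX rtT by (fastforce simp: F_r)
  next
    case False
    then have "v \<in> T" using v by auto
    then show ?thesis using F_T[of v] lo_lt_hi[of v] by auto
  qed
qed

abbreviation "RR u v \<equiv> (adj u v \<and> (pier (F u) (F v) \<or> pier (F v) (F u))) \<or>
   (\<not> adj u v \<and> frame (F u) \<inter> frame (F v) = {})"

lemma RR_sym: "RR u v \<Longrightarrow> RR v u" using sym by blast

lemma rel_djt:
  assumes u: "u \<in> T" and w: "w \<in> T" and d: "djt u w"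
  shows "RR u w"
proof -
  obtain x2 where x: "F u = (real (dep u), x2, lo u, hi u)" using F_T[OF u] by blast
  obtain y2 where y: "F w = (real (dep w), y2, lo w, hi w)" using F_T[OF w] by blast
  have "region (F u) \<inter> region (F w) = {}" unfolding x y using d
    by (intro region_disj) (auto simp: djt_def)
  then have "frame (F u) \<inter> frame (F w) = {}"
    using frame_disj_region valid_F u w by blast
  moreover have "\<not> adj u w"
  proof
    assume "adj u w"
    then have "(w \<noteq> rt \<and> u = par w) \<or> (u \<noteq> rt \<and> w = par u)" using adj_par u w by blast
    then show False using child[OF w] child[OF u] d lo_lt_hi[of u] lo_lt_hi[of w]
      by (auto simp: djt_def)
  qed
  ultimately show ?thesis by blast
qed

lemma rel_nest:
  assumes u: "u \<in> T" and w: "w \<in> T" and n: "nest u w"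
  shows "RR u w"
proof -
  have nc: "Ch u \<noteq> {}" "dep w = Suc (dep u) \<longrightarrow> par w = u" using nest_child[OF u w n] by auto
  then have nlf: "\<not> lf u" by (simp add: lf_def)
  have Fu: "F u = (real (dep u), real (dep u) + 3/2, lo u, hi u)" using F_T[OF u] nlf by auto
  obtain y2 where y: "F w = (real (dep w), y2, lo w, hi w)" "real (dep w) + 3/2 \<le> y2" using F_T[OF w] by blast
  show ?thesis
  proof (cases "dep w = Suc (dep u)")
    case True
    then have pw: "par w = u" using nc by auto
    have wr: "w \<noteq> rt" using True dep_rt by auto
    have "adj u w" using par[OF w wr] pw by auto
    moreover have "pier (F u) (F w)" unfolding Fu y(1) using True y(2) n lo_lt_hi[of w]
      by (intro pier_I) (auto simp: nest_def)
    ultimately show ?thesis by blast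
  next
    case False
    then have "dep w \<ge> dep u + 2" using n by (auto simp: nest_def)
    then have "real (dep u) + 3/2 < real (dep w)" by linarith
    then have "region (F u) \<inter> region (F w) = {}" unfolding Fu y(1) by (intro region_disj) auto
    then have "frame (F u) \<inter> frame (F w) = {}" using frame_disj_region valid_F u w by blast
    moreover have "\<not> adj u w"
    proof
      assume "adj u w"
      then have "(w \<noteq> rt \<and> u = par w) \<or> (u \<noteq> rt \<and> w = par u)" using adj_par u w by blast
      then show False using par[OF w] par[OF u] False n by (auto simp: nest_def)
    qed
    ultimately show ?thesis by blast
  qed
qed

lemma rel_r:
  assumes v: "v \<in> T"
  shows "RR r v"
proof -
  obtain x2 where x: "F v = (real (dep v), x2, lo v, hi v)" "real (dep v) + 3/2 \<le> x2"
    "lf v \<longrightarrow> x2 = XX + 1" "\<not> lf v \<longrightarrow> x2 = real (dep v) + 3/2" using F_T[OF v] by blast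
  have b: "0 \<le> lo v" "hi v \<le> 1" "lo v < hi v" using lohi_bounds[OF v] lo_lt_hi[of v] by auto
  have dX: "real (dep v) + 3 \<le> XX" using depX[OF v] .
  show ?thesis
  proof (cases "lf v")
    case True
    then have "adj r v" using adj_r[OF v] leaf_lf[OF v] by auto
    moreover have "pier (F r) (F v)" unfolding F_r x(1) using True x b dX by (intro pier_I) auto
    ultimately show ?thesis by blast
  next
    case False
    then have "\<not> adj r v" using adj_r[OF v] leaf_lf[OF v] by auto
    moreover have "frame (F r) \<inter> frame (F v) = {}" unfolding F_r x(1)
      using False x b dX by (intro frame_nested) auto
    ultimately show ?thesis by blast
  qed
qed

lemma rel_all:
  assumes u: "u \<in> insert r T" and v: "v \<in> insert r T" and ne: "u \<noteq> v"
  shows "RR u v"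
proof (cases "u = r")
  case True
  then show ?thesis using rel_r ne v by auto
next
  case False
  then have uT: "u \<in> T" using u by auto
  show ?thesis
  proof (cases "v = r")
    case True
    then show ?thesis using rel_r[OF uT] RR_sym by blast
  next
    case False
    then have vT: "v \<in> T" using v by auto
    have "u = v \<or> djt u v \<or> nest u v \<or> nest v u" using lam[OF uT vT] .
    then show ?thesis using ne rel_djt[OF uT vT] rel_nest[OF uT vT] rel_nest[OF vT uT] RR_sym
      by blast
  qed
qed

lemma c4_pc:
  assumes c: "c \<in> T" "c \<noteq> rt" and w: "w \<in> insert r T"
  shows "\<not> frame (F w) \<subseteq> region (F (par c)) \<inter> region (F c)"
proof
  assume H: "frame (F w) \<subseteq> region (F (par c)) \<inter> region (F c)"
  have p: "par c \<in> T" "Suc (dep (par c)) = dep c" using par[OF c] by auto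
  have "c \<in> Ch (par c)" using c by (auto simp: Ch_def)
  then have nlf: "\<not> lf (par c)" by (auto simp: lf_def)
  have Fp: "F (par c) = (real (dep (par c)), real (dep (par c)) + 3/2, lo (par c), hi (par c))"
    using F_T[OF p(1)] nlf by auto
  obtain y2 where y: "F c = (real (dep c), y2, lo c, hi c)" using F_T[OF c(1)] by blast
  have vw: "valid_box (F w)" using valid_F w by blast
  show False
  proof (cases "w = r")
    case True
    have "frame (F w) \<subseteq> region (F c)" using H by blast
    then have "lo c \<le> -2" using frame_bounds vw unfolding True F_r y by blast
    then show False using lohi_bounds[OF c(1)] by auto
  next
    case False
    then have wT: "w \<in> T" using w by auto
    obtain z2 where z: "F w = (real (dep w), z2, lo w, hi w)" "real (dep w) + 3/2 \<le> z2"
      using F_T[OF wT] by blast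
    have "frame (F w) \<subseteq> region (F (par c))" "frame (F w) \<subseteq> region (F c)" using H by auto
    then have "z2 \<le> real (dep (par c)) + 3/2" "real (dep c) \<le> real (dep w)"
      using frame_bounds vw unfolding Fp y z(1) by blast+
    then show False using z(2) p(2) by linarith
  qed
qed

lemma c4_rl:
  assumes l: "l \<in> T" "lf l" and w: "w \<in> insert r T"
  shows "\<not> frame (F w) \<subseteq> region (F r) \<inter> region (F l)"
proof
  assume H: "frame (F w) \<subseteq> region (F r) \<inter> region (F l)"
  obtain y2 where y: "F l = (real (dep l), y2, lo l, hi l)" "y2 = XX + 1" using F_T[OF l(1)] l(2) by blast
  have vw: "valid_box (F w)" using valid_F w by blast
  show False
  proof (cases "w = r")
    case True
    have "frame (F w) \<subseteq> region (F l)" using H by blast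
    then have "lo l \<le> -2" using frame_bounds vw unfolding True F_r y by blast
    then show False using lohi_bounds[OF l(1)] by auto
  next
    case False
    then have wT: "w \<in> T" using w by auto
    obtain z2 where z: "F w = (real (dep w), z2, lo w, hi w)" "lf w \<longrightarrow> z2 = XX + 1"
      using F_T[OF wT] by blast
    have "frame (F w) \<subseteq> region (F r)" "frame (F w) \<subseteq> region (F l)" using H by auto
    then have b: "z2 \<le> XX" "lo l \<le> lo w" "hi w \<le> hi l"
      using frame_bounds vw unfolding F_r y z(1) by blast+
    have "l = w \<or> djt l w \<or> nest l w \<or> nest w l" using lam[OF l(1) wT] .
    then show False
    proof (elim disjE)
      assume "l = w" then show False using b z l by auto
    next
      assume "djt l w" then show False using b lo_lt_hi[of w] lo_lt_hi[of l] by (auto simp: djt_def)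
    next
      assume "nest l w" then show False using nest_child[OF l(1) wT] l(2) by (auto simp: lf_def)
    next
      assume "nest w l" then show False using b by (auto simp: nest_def)
    qed
  qed
qed

lemma c4_all:
  assumes u: "u \<in> insert r T" and v: "v \<in> insert r T" and w: "w \<in> insert r T"
    and ne: "u \<noteq> v" and a: "adj u v"
  shows "\<not> frame (F w) \<subseteq> region (F u) \<inter> region (F v)"
proof (cases "u = r")
  case True
  then have vT: "v \<in> T" using v ne by auto
  then have "lf v" using a True adj_r leaf_lf by auto
  then show ?thesis using c4_rl[OF vT _ w] True by auto
next
  case False
  then have uT: "u \<in> T" using u by auto
  show ?thesis
  proof (cases "v = r")
    case True
    then have "lf u" using a sym adj_r[OF uT] leaf_lf[OF uT] by auto
    then show ?thesis using c4_rl[OF uT _ w] True by (auto simp: Int_commute)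
  next
    case False
    then have vT: "v \<in> T" using v by auto
    have "(v \<noteq> rt \<and> u = par v) \<or> (u \<noteq> rt \<and> v = par u)" using adj_par[OF uT vT a] .
    then show ?thesis using c4_pc[OF vT _ w] c4_pc[OF uT _ w] by (auto simp: Int_commute)
  qed
qed

lemma rep: "restricted_frame_rep (insert r T) adj F"
  by (rule rep_intro) (use valid_F rel_all c4_all in auto)

end



lemma frame_bounds2:
  assumes "frame (e1,e2,f1,f2) \<subseteq> region (a1,a2,b1,b2) \<inter> region (c1,c2,d1,d2)" "e1 < e2" "f1 < f2"
  shows "a1 \<le> e1 \<and> e2 \<le> a2 \<and> b1 \<le> f1 \<and> f2 \<le> b2 \<and> c1 \<le> e1 \<and> e2 \<le> c2 \<and> d1 \<le> f1 \<and> f2 \<le> d2"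
  using frame_bounds[of e1 e2 f1 f2 a1 a2 b1 b2] frame_bounds[of e1 e2 f1 f2 c1 c2 d1 d2] assms by auto

lemma fb: "frame W \<subseteq> region A \<Longrightarrow> valid_box W \<Longrightarrow> fst A \<le> fst W \<and> fst (snd W) \<le> fst (snd A) \<and>
   fst (snd (snd A)) \<le> fst (snd (snd W)) \<and> snd (snd (snd W)) \<le> snd (snd (snd A))"
  using frame_bounds[of "fst W" "fst (snd W)" "fst (snd (snd W))" "snd (snd (snd W))"
      "fst A" "fst (snd A)" "fst (snd (snd A))" "snd (snd (snd A))"]
  by (cases W, cases A) auto

lemma special:
  assumes d: "r \<noteq> a" "r \<noteq> b" "a \<noteq> b" and V: "V = {r, a, b}"
    and adj: "\<And>u v. u \<in> V \<Longrightarrow> v \<in> V \<Longrightarrow> u \<noteq> v \<Longrightarrow> adj u v"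
  shows "restricted_frame_graph V adj"
proof -
  define F :: "'a \<Rightarrow> box" where
    "F x = (if x = r then (-1, 3/2, -3, 3) else if x = a then (0, 2, -2, 2) else (1, 3, -1, 1))" for x
  have FF: "F r = (-1, 3/2, -3, 3)" "F a = (0, 2, -2, 2)" "F b = (1, 3, -1, 1)" using d by (auto simp: F_def)
  have p1: "pier (F r) (F a)" "pier (F r) (F b)" "pier (F a) (F b)" unfolding FF by (rule pier_I; simp)+
  have "restricted_frame_rep V adj F"
  proof (rule rep_intro)
    show "\<forall>v\<in>V. valid_box (F v)" using V FF by auto
  next
    fix u v assume uv: "u \<in> V" "v \<in> V" "u \<noteq> v"
    then have "pier (F u) (F v) \<or> pier (F v) (F u)" using V p1 by auto
    then show "(adj u v \<and> (pier (F u) (F v) \<or> pier (F v) (F u))) \<or> (\<not> adj u v \<and> frame (F u) \<inter> frame (F v) = {})"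
      using adj uv by blast
  next
    fix u v w assume uvw: "u \<in> V" "v \<in> V" "w \<in> V" "u \<noteq> v" "adj u v"
    show "\<not> frame (F w) \<subseteq> region (F u) \<inter> region (F v)"
    proof
      assume H: "frame (F w) \<subseteq> region (F u) \<inter> region (F v)"
      have vw: "valid_box (F w)" using uvw V FF by auto
      have B1: "fst (F u) \<le> fst (F w) \<and> fst (snd (F w)) \<le> fst (snd (F u)) \<and>
          fst (snd (snd (F u))) \<le> fst (snd (snd (F w))) \<and> snd (snd (snd (F w))) \<le> snd (snd (snd (F u)))"
        using H vw by (intro fb) auto
      have B2: "fst (F v) \<le> fst (F w) \<and> fst (snd (F w)) \<le> fst (snd (F v)) \<and>
          fst (snd (snd (F v))) \<le> fst (snd (snd (F w))) \<and> snd (snd (snd (F w))) \<le> snd (snd (snd (F v)))"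
        using H vw by (intro fb) auto
      have "u \<in> {r,a,b}" "v \<in> {r,a,b}" "w \<in> {r,a,b}" using uvw V by auto
      then show False using B1 B2 uvw(4) FF by auto
    qed
  qed
  then show ?thesis unfolding restricted_frame_graph_def by blast
qed

theorem lemma3p1:
  fixes V :: "'a set" and adj :: "'a \<Rightarrow> 'a \<Rightarrow> bool"
  assumes "chandelier V adj"
  shows "restricted_frame_graph V adj"
proof -
  have sg: "finite V" "\<And>u v. adj u v \<Longrightarrow> adj v u" "\<And>v. \<not> adj v v" "\<And>u v. adj u v \<Longrightarrow> u \<in> V \<and> v \<in> V"
    using assms unfolding chandelier_def simple_graph_def by blast+
  obtain T r where Tr: "r \<notin> T" "V = insert r T" "is_tree T adj" "\<forall>v\<in>T. adj r v \<longleftrightarrow> is_leaf T adj v"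
    using assms unfolding chandelier_def by blast
  have tr: "finite T" "T \<noteq> {}" "connected_on T adj" "acyclic_on T adj" using Tr(3) unfolding is_tree_def by auto
  show ?thesis
  proof (cases "\<exists>\<rho>\<in>T. \<not> is_leaf T adj \<rho>")
    case True
    then obtain \<rho> where rho: "\<rho> \<in> T" "\<not> is_leaf T adj \<rho>" by blast
    obtain num where num: "bij_betw num T {0..<card T}" using ex_bij_betw_finite_nat[OF tr(1)] by blast
    interpret geoloc T adj \<rho> num r
    proof
      show "inj_on num T" using num bij_betw_def by blast
      show "\<And>v. v \<in> T \<Longrightarrow> num v < card T" using num bij_betwE by fastforce
    qed (use sg tr Tr rho in auto)
    show ?thesis unfolding restricted_frame_graph_def using rep Tr(2) by blast
  next
    case False
    obtain \<rho> where rho: "\<rho> \<in> T" using tr(2) by blast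
    interpret treeloc T adj \<rho> by unfold_locales (use sg tr rho in auto)
    obtain b where b: "T = {\<rho>, b}" "b \<noteq> \<rho>" "adj \<rho> b" using all_leaves False by blast
    have "adj r \<rho>" "adj r b" using Tr(4) False b by auto
    then have adjs: "adj u v" if "u \<in> V" "v \<in> V" "u \<noteq> v" for u v
      using that b Tr(2) sg(2) by auto
    show ?thesis
      by (rule special[of r \<rho> b]) (use Tr b adjs in auto)
  qed
qed


end
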